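(* Let $n\ge 2$ and let $G$ be a graph on $2n+1$ vertices with at least $n^2+n$ edges that contains no two distinct vertices of the same degree joined by a path of length three. Let $\beta$ be the largest integer such that $G$ contains two distinct vertices of degree $\beta$, and let $u,v$ be two distinct vertices with $d(u)=d(v)=\beta$. Let $\mathbf{1}_{uv}=1$ if $uv\in E(G)$ and $\mathbf{1}_{uv}=0$ otherwise, and set $c=\beta-n-\mathbf{1}_{uv}$. If $c\ge 1$, then \[ e(\overline{G})\ge n^2+c^2-c-\mathbf{1}_{uv}, \] where $e(\overline{G})$ is the number of edges of the complement graph $\overline{G}$.
   Context: A path of length three joining vertices $a$ and $b$ is a path $a\,x\,y\,b$ with four distinct vertices and three edges. $\overline{G}$ denotes the complement of $G$. Graphs are finite and simple. *)

theory Defs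
  imports Main
begin

definition simple_graph :: "'a set \<Rightarrow> 'a set set \<Rightarrow> bool" where
  "simple_graph V E \<longleftrightarrow> finite V \<and> (\<forall>e\<in>E. e \<subseteq> V \<and> card e = 2)"

definition degree :: "'a set set \<Rightarrow> 'a \<Rightarrow> nat" where
  "degree E v = card {e \<in> E. v \<in> e}"

definition path3 :: "'a set set \<Rightarrow> 'a \<Rightarrow> 'a \<Rightarrow> bool" where
  "path3 E a b \<longleftrightarrow> (\<exists>x y. distinct [a, x, y, b] \<and>
      {a, x} \<in> E \<and> {x, y} \<in> E \<and> {y, b} \<in> E)"

definition compl_edges :: "'a set \<Rightarrow> 'a set set \<Rightarrow> 'a set set" where
  "compl_edges V E = {e. e \<subseteq> V \<and> card e = 2 \<and> e \<notin> E}"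

end

theory Submission
  imports Defs
begin

lemma degree_nb:
  assumes "simple_graph V E"
  shows "degree E x = card {y\<in>V. {x,y} \<in> E}"
proof -
  have "bij_betw (\<lambda>y. {x,y}) {y\<in>V. {x,y} \<in> E} {e\<in>E. x\<in>e}"
  proof (rule bij_betwI')
    fix y z assume "y \<in> {y\<in>V. {x,y} \<in> E}" "z \<in> {y\<in>V. {x,y} \<in> E}"
    show "({x,y} = {x,z}) = (y = z)" by (metis doubleton_eq_iff)
  next
    fix y assume "y \<in> {y\<in>V. {x,y} \<in> E}" thus "{x,y} \<in> {e\<in>E. x\<in>e}" by auto
  next
    fix e assume e: "e \<in> {e\<in>E. x\<in>e}"
    then have "e \<subseteq> V" "card e = 2" using assms unfolding simple_graph_def by auto
    then obtain a b where ab: "e = {a,b}" "a \<noteq> b" by (auto simp: card_2_iff)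
    show "\<exists>y\<in>{y\<in>V. {x,y} \<in> E}. e = {x,y}"
    proof (cases "x = a")
      case True
      then show ?thesis using e ab \<open>e \<subseteq> V\<close> by (intro bexI[of _ b]) auto
    next
      case False
      then have "x = b" using e ab by auto
      then show ?thesis using e ab \<open>e \<subseteq> V\<close> by (intro bexI[of _ a]) (auto simp: insert_commute)
    qed
  qed
  thus ?thesis unfolding degree_def by (simp add: bij_betw_same_card)
qed

lemma graph_finE:
  assumes "simple_graph V E" shows "finite E"
proof -
  have "E \<subseteq> Pow V" using assms by (auto simp: simple_graph_def)
  moreover have "finite V" using assms by (auto simp: simple_graph_def)
  ultimately show ?thesis by (meson finite_Pow_iff finite_subset)
qed

lemma card_filter_sum:
  "finite A \<Longrightarrow> card {x\<in>A. P x} = (\<Sum>x\<in>A. if P x then 1 else 0)"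
  by (simp add: sum.inter_filter[symmetric])

lemma handshake:
  assumes "simple_graph V E"
  shows "(\<Sum>x\<in>V. degree E x) = 2 * card E"
proof -
  have fV: "finite V" using assms by (auto simp: simple_graph_def)
  have fE: "finite E" using graph_finE[OF assms] .
  have "(\<Sum>x\<in>V. degree E x) = (\<Sum>x\<in>V. \<Sum>e\<in>E. if x \<in> e then 1 else 0)"
    unfolding degree_def using fE by (simp add: card_filter_sum)
  also have "\<dots> = (\<Sum>e\<in>E. \<Sum>x\<in>V. if x\<in>e then 1 else 0)" by (rule sum.swap)
  also have "\<dots> = (\<Sum>e\<in>E. 2)"
  proof (rule sum.cong)
    fix e assume "e \<in> E"
    then have "e \<subseteq> V" "card e = 2" using assms by (auto simp: simple_graph_def)
    then have "{x\<in>V. x\<in>e} = e" by auto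
    then show "(\<Sum>x\<in>V. if x\<in>e then 1 else 0) = (2::nat)"
      using card_filter_sum[OF fV, of "\<lambda>x. x \<in> e"] \<open>card e = 2\<close> by simp
  qed simp
  finally show ?thesis by simp
qed

lemma compl_card:
  assumes "simple_graph V E"
  shows "card (compl_edges V E) = (card V choose 2) - card E"
proof -
  have fV: "finite V" using assms by (auto simp: simple_graph_def)
  have eq: "compl_edges V E = {e. e \<subseteq> V \<and> card e = 2} - E" unfolding compl_edges_def by auto
  have sub: "E \<subseteq> {e. e \<subseteq> V \<and> card e = 2}" using assms by (auto simp: simple_graph_def)
  have "card (compl_edges V E) = card {e. e \<subseteq> V \<and> card e = 2} - card E"
    unfolding eq using sub graph_finE[OF assms] by (simp add: card_Diff_subset)
  also have "card {e. e \<subseteq> V \<and> card e = 2} = card V choose 2" using n_subsets[OF fV] by simp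
  finally show ?thesis .
qed

lemma sum_distinct_nat:
  fixes T :: "nat set"
  assumes "finite T"
  shows "card T * (card T - 1) \<le> 2 * \<Sum>T"
  using assms
proof (induction "card T" arbitrary: T)
  case 0 then show ?case by simp
next
  case (Suc k)
  then have ne: "T \<noteq> {}" by auto
  define M where "M = Max T"
  have MT: "M \<in> T" using Suc.prems ne by (simp add: M_def)
  have "T \<subseteq> {0..M}" using Suc.prems by (auto simp: M_def)
  then have "card T \<le> Suc M" using card_mono[of "{0..M}" T] by simp
  have c': "card (T - {M}) = k" using Suc.hyps(2) MT Suc.prems by simp
  have IH: "card (T - {M}) * (card (T - {M}) - 1) \<le> 2 * \<Sum>(T - {M})"
    using Suc.hyps(1)[of "T - {M}"] c' Suc.prems by simp
  have "\<Sum>T = M + \<Sum>(T - {M})" using Suc.prems MT by (simp add: sum.remove)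
  then show ?case using IH c' \<open>card T \<le> Suc M\<close> Suc.hyps(2)[symmetric]
    by (cases k) (auto simp: algebra_simps)
qed

lemma sum_inj_nat:
  fixes g :: "'b \<Rightarrow> nat"
  assumes "finite H" "inj_on g H"
  shows "card H * (card H - 1) \<le> 2 * sum g H"
proof -
  have "sum g H = \<Sum>(g ` H)" using assms by (simp add: sum.reindex)
  moreover have "card (g ` H) = card H" using assms by (simp add: card_image)
  ultimately show ?thesis using sum_distinct_nat[of "g ` H"] assms by simp
qed

lemma arith1:
  fixes J s d c :: int
  assumes "J \<ge> 0" "s \<ge> 0" "d \<ge> 0" "c \<ge> 0"
  shows "J*(s+d) + (s+d)*(J+s+d-1) \<le> 2*((J+s+d+2*c+1) - s)*(s+d) + s*(s-1)"
proof -
  have e: "2*((J+s+d+2*c+1) - s)*(s+d) + s*(s-1) - (J*(s+d) + (s+d)*(J+s+d-1)) = d*d + 4*c*s + 4*c*d + 2*s + 3*d"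
    by (simp add: algebra_simps)
  have "d*d \<ge> 0" "c*s \<ge> 0" "c*d \<ge> 0" using assms by auto
  then show ?thesis using e assms by linarith
qed
lemma arith2:
  fixes n c k :: int
  shows "2*(n+c) + (2*n+2*c-2*k)*(n-c-1) + k*(2 + (k-2*c-1)) + (k-2*c-1)*(2*n+2*c-2*k+k) = 2*(n*n+n-c*c+c) - 4*((n+c-k)*(c+1))"
  by (simp add: algebra_simps)

lemma arith1n:
  fixes J s d c :: nat
  shows "J*(s+d) + (s+d)*(J+s+d-1) \<le> 2*((J+d+2*c+1)*(s+d)) + s*(s-1)"
proof (cases "s + d = 0")
  case True then show ?thesis by simp
next
  case False
  have a: "int (J+s+d-1) = int J + int s + int d - 1" using False by auto
  have b: "int (s*(s-1)) = int s * (int s - 1)" by (cases s) (auto simp: algebra_simps)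
  have ineq: "int J*(int s+int d) + (int s+int d)*(int J+int s+int d-1) \<le> 2*((int J+int s+int d+2*int c+1) - int s)*(int s+int d) + int s*(int s-1)"
    by (rule arith1) auto
  have eqL: "int (J*(s+d) + (s+d)*(J+s+d-1)) = int J*(int s+int d) + (int s+int d)*(int J+int s+int d-1)"
    unfolding of_nat_add[of "J*(s+d)"] of_nat_mult[of "s+d"] a by simp
  have eqR: "int (2*((J+d+2*c+1)*(s+d)) + s*(s-1)) = 2*((int J+int s+int d+2*int c+1) - int s)*(int s+int d) + int s*(int s-1)"
    unfolding of_nat_add[of "2*((J+d+2*c+1)*(s+d))"] b by (simp add: algebra_simps)
  have "int (J*(s+d) + (s+d)*(J+s+d-1)) \<le> int (2*((J+d+2*c+1)*(s+d)) + s*(s-1))"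
    unfolding eqL eqR by (rule ineq)
  then show ?thesis by linarith
qed

theorem lemma2p1:
  fixes V :: "'a set" and E :: "'a set set" and n :: nat and u v :: 'a and \<beta> :: nat
  assumes graph: "simple_graph V E"
    and n2: "n \<ge> 2"
    and order: "card V = 2 * n + 1"
    and size: "card E \<ge> n ^ 2 + n"
    and nopath: "\<forall>a\<in>V. \<forall>b\<in>V. a \<noteq> b \<and> degree E a = degree E b \<longrightarrow> \<not> path3 E a b"
    and beta_def: "\<beta> = Max {d. \<exists>x\<in>V. \<exists>y\<in>V. x \<noteq> y \<and> degree E x = d \<and> degree E y = d}"
    and uv: "u \<in> V" "v \<in> V" "u \<noteq> v" "degree E u = \<beta>" "degree E v = \<beta>"
    and c_pos: "int \<beta> - int n - (if {u, v} \<in> E then 1 else 0) \<ge> 1"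
  shows "int (card (compl_edges V E)) \<ge>
    (let c = int \<beta> - int n - (if {u, v} \<in> E then 1 else 0);
         i = (if {u, v} \<in> E then 1 else 0)
     in int n ^ 2 + c ^ 2 - c - i)"
proof -
  have fV: "finite V" using graph by (simp add: simple_graph_def)
  have EV: "\<And>e. e \<in> E \<Longrightarrow> e \<subseteq> V \<and> card e = 2" using graph by (simp add: simple_graph_def)
  have noloop: "\<And>x. {x,x} \<notin> E" using EV by fastforce
  have inV: "\<And>x y. {x,y} \<in> E \<Longrightarrow> x \<in> V \<and> y \<in> V" using EV by blast
  define nb where "nb x = {y\<in>V. {x,y} \<in> E}" for x
  have deg: "\<And>x. degree E x = card (nb x)" using degree_nb[OF graph] nb_def by simp
  have fnb: "\<And>x. finite (nb x)" using fV nb_def by simp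
  have nbsym: "\<And>x y. (y \<in> nb x) = (x \<in> nb y)" unfolding nb_def using inV by (auto simp: insert_commute)
  have nbV: "\<And>x. nb x \<subseteq> V" unfolding nb_def by auto
  have nbx: "\<And>x. x \<notin> nb x" unfolding nb_def using noloop by auto
  have P3: "\<And>a b x y. a \<in> V \<Longrightarrow> b \<in> V \<Longrightarrow> degree E a = degree E b \<Longrightarrow> distinct [a,x,y,b] \<Longrightarrow>
       x \<in> nb a \<Longrightarrow> y \<in> nb x \<Longrightarrow> b \<in> nb y \<Longrightarrow> False"
  proof -
    fix a b x y assume "a \<in> V" "b \<in> V" "degree E a = degree E b" "distinct [a,x,y,b]"
      "x \<in> nb a" "y \<in> nb x" "b \<in> nb y"
    then have "path3 E a b" unfolding path3_def nb_def by auto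
    then show False using nopath \<open>a \<in> V\<close> \<open>b \<in> V\<close> \<open>degree E a = degree E b\<close> \<open>distinct [a,x,y,b]\<close> by auto
  qed
  define i :: nat where "i = (if {u,v}\<in>E then 1 else 0)"
  define A where "A = nb u - {v}"
  define B where "B = nb v - {u}"
  have vu: "(v \<in> nb u) = ({u,v} \<in> E)" "(u \<in> nb v) = ({u,v} \<in> E)"
    using uv unfolding nb_def by (auto simp: insert_commute)
  have cardA: "card A = \<beta> - i" unfolding A_def i_def using uv deg vu fnb by (simp add: card_Diff_singleton_if)
  have cardB: "card B = \<beta> - i" unfolding B_def i_def using uv deg vu fnb by (simp add: card_Diff_singleton_if)
  have uA: "u \<notin> A" "v \<notin> A" "u \<notin> B" "v \<notin> B" unfolding A_def B_def using nbx by auto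
  have AV: "A \<subseteq> V" "B \<subseteq> V" unfolding A_def B_def using nbV by auto
  have AB: "\<And>x y. x \<in> A \<Longrightarrow> y \<in> B \<Longrightarrow> x \<noteq> y \<Longrightarrow> y \<notin> nb x"
  proof
    fix x y assume "x \<in> A" "y \<in> B" "x \<noteq> y" "y \<in> nb x"
    moreover have "v \<in> nb y" using \<open>y \<in> B\<close> nbsym unfolding B_def by auto
    ultimately show False using P3[of u v x y] uv uA unfolding A_def by auto
  qed
  define C where "C = A \<inter> B"
  define N where "N = V - ({u,v} \<union> A \<union> B)"
  define S where "S x = N \<inter> nb x" for x
  define m where "m = \<beta> - i"
  define k where "k = card C"
  define r where "r = card N"
  have fA: "finite A" "finite B" "finite C" "finite N" using AV fV by (auto simp: C_def N_def intro: rev_finite_subset)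
  define c where "c = \<beta> - n - i"
  have beta_c: "\<beta> = n + c + i" and c1: "c \<ge> 1"
    using c_pos unfolding c_def i_def by (auto split: if_splits)
  have mnc: "m = n + c" unfolding m_def using beta_c by simp
  have CAB: "C \<subseteq> A \<union> B" "C \<subseteq> A" "C \<subseteq> B" unfolding C_def by auto
  have cardUn: "card (A \<union> B) + k = 2*m"
    using card_Un_Int[of A B] fA cardA cardB unfolding m_def k_def C_def by simp
  have UV: "{u,v} \<union> A \<union> B \<subseteq> V" using uv AV by auto
  have cUV: "card ({u,v} \<union> (A \<union> B)) = 2 + card (A \<union> B)"
    using card_Un_disjoint[of "{u,v}" "A \<union> B"] fA uA uv by auto
  have Vsplit: "card V = 2 + card (A \<union> B) + r"
  proof -
    have "r = card V - card ({u,v} \<union> A \<union> B)" unfolding r_def N_def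
      using UV fV by (simp add: card_Diff_subset rev_finite_subset)
    moreover have "card ({u,v} \<union> A \<union> B) \<le> card V" using UV fV card_mono by blast
    ultimately show ?thesis using cUV by (simp add: Un_assoc)
  qed
  have kr: "k = r + 2*c + 1" using Vsplit cardUn order mnc by linarith
  have SN: "\<And>x. S x \<subseteq> N" unfolding S_def by auto
  have Sr: "\<And>x. card (S x) \<le> r" unfolding r_def using SN fA card_mono by metis
  have NV: "N \<subseteq> V" "u \<notin> N" "v \<notin> N" "N \<inter> A = {}" "N \<inter> B = {}" unfolding N_def by auto
  have nbC: "\<And>x. x \<in> C \<Longrightarrow> nb x = {u,v} \<union> S x"
  proof
    fix x assume xC: "x \<in> C"
    show "nb x \<subseteq> {u,v} \<union> S x"
    proof
      fix y assume y: "y \<in> nb x"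
      have "y \<noteq> x" using y nbx by auto
      have "y \<notin> A" using AB[of y x] xC CAB y nbsym \<open>y \<noteq> x\<close> by auto
      moreover have "y \<notin> B" using AB[of x y] xC CAB y \<open>y \<noteq> x\<close> by auto
      moreover have "y \<in> V" using y nbV by auto
      ultimately show "y \<in> {u,v} \<union> S x" using y unfolding S_def N_def by auto
    qed
  next
    fix x assume xC: "x \<in> C"
    have "u \<in> nb x" "v \<in> nb x" using xC CAB nbsym unfolding A_def B_def by auto
    then show "{u,v} \<union> S x \<subseteq> nb x" unfolding S_def by auto
  qed
  have degC: "\<And>x. x \<in> C \<Longrightarrow> degree E x = 2 + card (S x)"
  proof -
    fix x assume "x \<in> C"
    have fS: "finite (S x)" using SN fA rev_finite_subset by metis
    have dj: "{u,v} \<inter> S x = {}" using SN NV by blast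
    have "card ({u,v} \<union> S x) = card {u,v} + card (S x)"
      using card_Un_disjoint[of "{u,v}" "S x"] fS dj by simp
    then show "degree E x = 2 + card (S x)" using deg nbC \<open>x \<in> C\<close> uv by simp
  qed
  have pigeon: "\<exists>x0\<in>C. \<exists>y0\<in>C. x0 \<noteq> y0 \<and> card (S x0) = card (S y0)"
  proof (rule ccontr)
    assume "\<not> ?thesis"
    then have "inj_on (\<lambda>x. card (S x)) C" unfolding inj_on_def by blast
    moreover have "(\<lambda>x. card (S x)) ` C \<subseteq> {0..r}" using Sr by auto
    ultimately have "card C \<le> card {0..r}" using card_inj_on_le by blast
    then show False using kr c1 k_def by simp
  qed
  have CV: "C \<subseteq> V" using CAB AV by auto
  have Cuv: "\<And>x. x \<in> C \<Longrightarrow> x \<noteq> u \<and> x \<noteq> v" using CAB uA by blast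
  have i0: "{u,v} \<notin> E"
  proof
    assume uvE: "{u,v} \<in> E"
    obtain x0 y0 where xy: "x0 \<in> C" "y0 \<in> C" "x0 \<noteq> y0" "card (S x0) = card (S y0)" using pigeon by blast
    have "u \<in> nb x0" "v \<in> nb u" "y0 \<in> nb v" using nbC xy vu uvE CAB B_def by auto
    then show False using P3[of x0 y0 u v] xy degC CV Cuv uv by auto
  qed
  then have i0': "i = 0" unfolding i_def by simp
  have mb: "m = \<beta>" using i0' m_def by simp
  define R where "R = {j. \<exists>x\<in>C. \<exists>y\<in>C. x \<noteq> y \<and> card (S x) = j \<and> card (S y) = j}"
  have "R \<subseteq> {0..r}"
  proof
    fix j assume "j \<in> R"
    then obtain x where "x \<in> C" "card (S x) = j" unfolding R_def by blast
    then show "j \<in> {0..r}" using Sr[of x] by simp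
  qed
  then have Rfin: "finite R" by (rule finite_subset) simp
  have Rne: "R \<noteq> {}" using pigeon unfolding R_def by auto
  define J where "J = Max R"
  have "J \<in> R" unfolding J_def using Rfin Rne by simp
  then obtain x0 y0 where xy: "x0 \<in> C" "y0 \<in> C" "x0 \<noteq> y0" "card (S x0) = J" "card (S y0) = J"
    unfolding R_def by blast
  have Jmax: "card (S x) \<le> J" if "x\<in>C" "y\<in>C" "x\<noteq>y" "card (S x) = card (S y)" for x y
  proof -
    have "\<exists>a\<in>C. \<exists>b\<in>C. a \<noteq> b \<and> card (S a) = card (S x) \<and> card (S b) = card (S x)"
      using that by metis
    then have "card (S x) \<in> R" unfolding R_def by simp
    then show ?thesis unfolding J_def using Max_ge[OF Rfin] by simp
  qed
  have Jr: "J \<le> r" using xy Sr by metis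
  have noedge: "\<And>w z. w \<in> S x0 \<Longrightarrow> z \<in> S y0 \<Longrightarrow> w \<noteq> z \<Longrightarrow> z \<notin> nb w"
  proof
    fix w z assume wz: "w \<in> S x0" "z \<in> S y0" "w \<noteq> z" "z \<in> nb w"
    have "w \<in> N" "z \<in> N" using wz SN by auto
    then have "w \<notin> C" "z \<notin> C" using NV CAB by auto
    moreover have "w \<in> nb x0" "y0 \<in> nb z" using wz nbsym unfolding S_def by auto
    moreover have "degree E x0 = degree E y0" using degC xy by simp
    ultimately show False using P3[of x0 y0 w z] xy wz CV by auto
  qed
  define f where "f w = card (N \<inter> nb w)" for w
  have crux1: "(\<Sum>w\<in>N. f w) \<le> J*(r-J) + (r-J)*(r-1)"
  proof -
    have f1: "f w \<le> r - J" if w: "w \<in> S x0" for w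
    proof -
      have wN: "w \<in> N" using w SN by auto
      have sub: "N \<inter> nb w \<subseteq> N - (S y0 \<union> {w})" using noedge[OF w] nbx by auto
      have sub2: "S y0 \<union> {w} \<subseteq> N" using SN wN by auto
      have "card (N - (S y0 \<union> {w})) = r - card (S y0 \<union> {w})"
        unfolding r_def using sub2 fA by (simp add: card_Diff_subset rev_finite_subset)
      moreover have "card (S y0) \<le> card (S y0 \<union> {w})"
        using sub2 fA by (intro card_mono) (auto intro: rev_finite_subset)
      moreover have "card (N \<inter> nb w) \<le> card (N - (S y0 \<union> {w}))"
        using sub fA by (intro card_mono) auto
      ultimately show ?thesis unfolding f_def using xy by linarith
    qed
    have f2: "f w \<le> r - 1" if w: "w \<in> N" for w
    proof -
      have "N \<inter> nb w \<subseteq> N - {w}" using nbx by auto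
      then have "card (N \<inter> nb w) \<le> card (N - {w})" using fA by (intro card_mono) auto
      then show ?thesis unfolding f_def r_def using w fA by simp
    qed
    have SxN: "S x0 \<subseteq> N" using SN by auto
    have "(\<Sum>w\<in>N. f w) = (\<Sum>w\<in>N - S x0. f w) + (\<Sum>w\<in>S x0. f w)"
      using sum.subset_diff[OF SxN fA(4)] by simp
    moreover have "(\<Sum>w\<in>S x0. f w) \<le> card (S x0) * (r - J)"
      using sum_bounded_above[of "S x0" f "r - J"] f1 by simp
    moreover have "(\<Sum>w\<in>N - S x0. f w) \<le> card (N - S x0) * (r - 1)"
      using sum_bounded_above[of "N - S x0" f "r - 1"] f2 by simp
    moreover have "card (N - S x0) = r - J" unfolding r_def using SxN fA xy
      by (simp add: card_Diff_subset rev_finite_subset)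
    ultimately show ?thesis using xy by (simp add: mult.commute)
  qed
  define g where "g x = card (N - nb x)" for x
  have gS: "\<And>x. g x = r - card (S x)"
  proof -
    fix x
    have "N - nb x = N - S x" unfolding S_def by auto
    then show "g x = r - card (S x)" unfolding g_def r_def using SN fA
      by (simp add: card_Diff_subset rev_finite_subset)
  qed
  define \<alpha> where "\<alpha> = (\<Sum>x\<in>C. g x)"
  have crux2: "J*(r-J) + (r-J)*(r-1) \<le> 2*\<alpha>"
  proof -
    define L where "L = {x\<in>C. card (S x) \<le> J}"
    define H where "H = C - L"
    have LC: "L \<subseteq> C" unfolding L_def by auto
    have fL: "finite L" "finite H" using LC fA unfolding H_def by (auto intro: rev_finite_subset)
    have s1: "\<alpha> = (\<Sum>x\<in>H. g x) + (\<Sum>x\<in>L. g x)"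
      unfolding \<alpha>_def H_def using sum.subset_diff[OF LC fA(3)] by simp
    have s2: "card L * (r - J) \<le> (\<Sum>x\<in>L. g x)"
      using sum_bounded_below[of L "r - J" g] gS unfolding L_def by force
    have injH: "inj_on g H"
    proof (rule inj_onI)
      fix x y assume xy': "x \<in> H" "y \<in> H" "g x = g y"
      then have "card (S x) = card (S y)" using gS Sr by (metis diff_diff_cancel)
      then show "x = y" using Jmax[of x y] xy' unfolding H_def L_def by auto
    qed
    have gH: "g ` H \<subseteq> {0..<r-J}" using gS Sr unfolding H_def L_def by (auto simp: less_diff_conv2)
    have cH: "card H \<le> r - J" using card_inj_on_le[OF injH gH] by simp
    have s3: "card H * (card H - 1) \<le> 2 * (\<Sum>x\<in>H. g x)" using sum_inj_nat[OF fL(2) injH] .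
    have cLH: "card L + card H = k" unfolding k_def H_def using LC fA(3) card_Diff_subset[OF fL(1) LC] card_mono[OF fA(3) LC]
      by simp
    obtain d where d: "r = J + card H + d" using cH Jr by (intro that[of "r - J - card H"]) simp
    have cL: "card L = J + d + 2*c + 1" using cLH kr d by linarith
    have "J*(card H+d) + (card H+d)*(J+card H+d-1) \<le> 2*((J+d+2*c+1)*(card H+d)) + card H*(card H-1)"
      by (rule arith1n)
    moreover have "(J+d+2*c+1)*(card H+d) \<le> (\<Sum>x\<in>L. g x)"
      using s2 cL d by simp
    moreover have "r - J = card H + d" "r - 1 = J+card H+d-1" using d by auto
    ultimately show ?thesis using s1 s3 by simp
  qed
  have dc: "\<alpha> = (\<Sum>w\<in>N. card (C - nb w))"
  proof -
    have "\<alpha> = (\<Sum>x\<in>C. \<Sum>w\<in>N. if w \<notin> nb x then 1 else 0)"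
      unfolding \<alpha>_def g_def using fA by (simp add: card_filter_sum[symmetric] set_diff_eq)
    also have "\<dots> = (\<Sum>w\<in>N. \<Sum>x\<in>C. if w \<notin> nb x then 1 else 0)" by (rule sum.swap)
    also have "\<dots> = (\<Sum>w\<in>N. \<Sum>x\<in>C. if x \<notin> nb w then 1 else 0)" using nbsym by simp
    also have "\<dots> = (\<Sum>w\<in>N. card (C - nb w))"
      using fA by (simp add: card_filter_sum[symmetric] set_diff_eq)
    finally show ?thesis .
  qed
  define ABC where "ABC = (A \<union> B) - C"
  have cABC: "card ABC + 2*k = 2*m"
  proof -
    have "card C \<le> card (A \<union> B)" using CAB fA by (intro card_mono) auto
    then show ?thesis unfolding ABC_def using cardUn CAB fA k_def by (simp add: card_Diff_subset)
  qed
  have mV: "m + 2 \<le> card V"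
  proof -
    have "card ({u,v} \<union> A) = 2 + card A" using card_Un_disjoint[of "{u,v}" A] fA uA uv by auto
    moreover have "card ({u,v} \<union> A) \<le> card V" using uv AV fV by (intro card_mono) auto
    ultimately show ?thesis using cardA m_def by simp
  qed
  have dP: "degree E x \<le> card V - (m + 2)" if x: "x \<in> ABC" for x
  proof (cases "x \<in> A")
    case True
    then have xB: "x \<notin> B" using x unfolding ABC_def C_def by auto
    have sub: "nb x \<subseteq> V - ({v,x} \<union> B)"
    proof
      fix y assume y: "y \<in> nb x"
      have "y \<noteq> x" using y nbx by auto
      moreover have "y \<noteq> v" using y nbsym xB True uA unfolding B_def by auto
      moreover have "y \<notin> B" using AB[OF True] y \<open>y \<noteq> x\<close> by auto
      ultimately show "y \<in> V - ({v,x} \<union> B)" using y nbV by auto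
    qed
    have "v \<noteq> x" using True uA by auto
    then have "card ({v,x} \<union> B) = card B + 2" using xB uA True fA by auto
    moreover have "{v,x} \<union> B \<subseteq> V" using uv AV True by auto
    ultimately have "card (V - ({v,x} \<union> B)) = card V - (m+2)"
      using fV cardB m_def by (simp add: card_Diff_subset rev_finite_subset)
    then show ?thesis using deg card_mono[OF _ sub] fV by (metis finite_Diff)
  next
    case False
    then have xB: "x \<in> B" using x unfolding ABC_def by auto
    have sub: "nb x \<subseteq> V - ({u,x} \<union> A)"
    proof
      fix y assume y: "y \<in> nb x"
      have "y \<noteq> x" using y nbx by auto
      moreover have "y \<noteq> u" using y nbsym xB False uA unfolding A_def by auto
      moreover have "y \<notin> A" using AB[OF _ xB] y nbsym \<open>y \<noteq> x\<close> by blast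
      ultimately show "y \<in> V - ({u,x} \<union> A)" using y nbV by auto
    qed
    have "u \<noteq> x" using xB uA by auto
    then have "card ({u,x} \<union> A) = card A + 2" using False uA xB fA by auto
    moreover have "{u,x} \<union> A \<subseteq> V" using uv AV xB by auto
    ultimately have "card (V - ({u,x} \<union> A)) = card V - (m+2)"
      using fV cardA m_def by (simp add: card_Diff_subset rev_finite_subset)
    then show ?thesis using deg card_mono[OF _ sub] fV by (metis finite_Diff)
  qed
  have dC: "degree E x + g x = 2 + r" if x: "x \<in> C" for x
    using degC[OF x] gS[of x] Sr[of x] by simp
  have dN: "degree E w + card (C - nb w) \<le> card ABC + k + f w" if w: "w \<in> N" for w
  proof -
    have sub: "nb w \<subseteq> ABC \<union> (C \<inter> nb w) \<union> (N \<inter> nb w)"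
    proof
      fix y assume y: "y \<in> nb w"
      have "y \<noteq> u" using y nbsym w NV uv unfolding A_def by auto
      moreover have "y \<noteq> v" using y nbsym w NV uv unfolding B_def by auto
      ultimately show "y \<in> ABC \<union> (C \<inter> nb w) \<union> (N \<inter> nb w)" using y nbV
        unfolding ABC_def N_def by auto
    qed
    have fABC: "finite ABC" unfolding ABC_def using fA by simp
    have "card (nb w) \<le> card (ABC \<union> (C \<inter> nb w) \<union> (N \<inter> nb w))"
      using sub fABC fA by (intro card_mono) auto
    also have "\<dots> \<le> card ABC + card (C \<inter> nb w) + card (N \<inter> nb w)"
      by (metis add_le_mono card_Un_le le_refl order_trans)
    finally have "degree E w \<le> card ABC + card (C \<inter> nb w) + f w" using deg f_def by simp
    moreover have "card (C \<inter> nb w) + card (C - nb w) = k" unfolding k_def using fA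
      by (metis Int_Diff_Un Int_Diff_disjoint card_Un_disjoint finite_Diff finite_Int)
    ultimately show ?thesis by linarith
  qed
  have fABC: "finite ABC" unfolding ABC_def using fA by simp
  have sumV: "(\<Sum>x\<in>V. degree E x) = degree E u + degree E v + (\<Sum>x\<in>ABC. degree E x)
      + (\<Sum>x\<in>C. degree E x) + (\<Sum>x\<in>N. degree E x)"
  proof -
    have V1: "V = {u,v} \<union> (ABC \<union> C \<union> N)" unfolding ABC_def N_def using uv AV CAB by auto
    have "(\<Sum>x\<in>V. degree E x) = (\<Sum>x\<in>{u,v}. degree E x) + (\<Sum>x\<in>ABC \<union> C \<union> N. degree E x)"
      unfolding V1 using fA fABC uA NV CAB unfolding ABC_def
      by (intro sum.union_disjoint) auto
    also have "(\<Sum>x\<in>ABC \<union> C \<union> N. degree E x) = (\<Sum>x\<in>ABC \<union> C. degree E x) + (\<Sum>x\<in>N. degree E x)"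
      using fA fABC NV CAB unfolding ABC_def by (intro sum.union_disjoint) auto
    also have "(\<Sum>x\<in>ABC \<union> C. degree E x) = (\<Sum>x\<in>ABC. degree E x) + (\<Sum>x\<in>C. degree E x)"
      using fA fABC unfolding ABC_def by (intro sum.union_disjoint) auto
    finally show ?thesis using uv by simp
  qed
  have s1: "(\<Sum>x\<in>ABC. degree E x) \<le> card ABC * (card V - (m+2))"
    using sum_bounded_above[of ABC "\<lambda>x. degree E x" "card V - (m+2)"] dP by simp
  have s2: "(\<Sum>x\<in>C. degree E x) + \<alpha> = k * (2 + r)"
    unfolding \<alpha>_def k_def using dC by (simp add: sum.distrib[symmetric])
  have s3: "(\<Sum>x\<in>N. degree E x) + \<alpha> \<le> r * (card ABC + k) + (\<Sum>w\<in>N. f w)"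
  proof -
    have "(\<Sum>x\<in>N. degree E x) + \<alpha> = (\<Sum>w\<in>N. degree E w + card (C - nb w))"
      unfolding dc by (simp add: sum.distrib)
    also have "\<dots> \<le> (\<Sum>w\<in>N. card ABC + k + f w)" using dN by (intro sum_mono) auto
    also have "\<dots> = r * (card ABC + k) + (\<Sum>w\<in>N. f w)" unfolding r_def by (simp add: sum.distrib)
    finally show ?thesis .
  qed
  have hs: "(\<Sum>x\<in>V. degree E x) = 2 * card E" using handshake[OF graph] .
  have main: "2 * card E \<le> 2*m + card ABC * (card V - (m+2)) + k * (2 + r) + r * (card ABC + k)"
    using sumV s1 s2 s3 crux1 crux2 hs uv mb by linarith
  have ia: "int (card ABC) = 2*int n + 2*int c - 2*int k" using cABC mnc by simp
  have iq: "int (card V - (m+2)) = int n - int c - 1" using mV order mnc by simp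
  have ir: "int r = int k - 2*int c - 1" using kr by simp
  have ikm: "int k \<le> int n + int c" using cABC mnc by simp
  have "int (2 * card E) \<le> int (2*m + card ABC * (card V - (m+2)) + k * (2 + r) + r * (card ABC + k))"
    using main by (simp only: of_nat_le_iff)
  then have "2 * int (card E) \<le> 2*(int n+int c) + (2*int n+2*int c-2*int k)*(int n-int c-1)
      + int k*(2 + (int k-2*int c-1)) + (int k-2*int c-1)*(2*int n+2*int c-2*int k+int k)"
    unfolding of_nat_add of_nat_mult ia iq ir using mnc by simp
  also have "\<dots> = 2*(int n*int n+int n-int c*int c+int c) - 4*((int n+int c-int k)*(int c+1))"
    by (rule arith2)
  finally have E2: "2 * int (card E) \<le> 2*(int n*int n+int n-int c*int c+int c) - 4*((int n+int c-int k)*(int c+1))" .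
  have "0 \<le> (int n+int c-int k)*(int c+1)" using ikm by simp
  then have E3: "int (card E) \<le> int n*int n+int n-int c*int c+int c"
  proof -
    assume P0: "0 \<le> (int n+int c-int k)*(int c+1)"
    define P where "P = (int n+int c-int k)*(int c+1)"
    define Q where "Q = int n*int n+int n-int c*int c+int c"
    have "2 * int (card E) \<le> 2*Q - 4*P" using E2 unfolding P_def Q_def .
    moreover have "0 \<le> P" using P0 unfolding P_def .
    ultimately have "int (card E) \<le> Q" by linarith
    then show ?thesis unfolding Q_def .
  qed
  have ch: "card V choose 2 = n * (2*n+1)" unfolding order choose_two by simp
  have cc: "int (card (compl_edges V E)) = int n * (2*int n+1) - int (card E)"
  proof -
    have "card E \<le> card V choose 2"
    proof -
      have "E \<subseteq> {e. e \<subseteq> V \<and> card e = 2}" using EV by auto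
      then have "card E \<le> card {e. e \<subseteq> V \<and> card e = 2}" using fV by (intro card_mono) auto
      then show ?thesis using n_subsets[OF fV] by simp
    qed
    then show ?thesis using compl_card[OF graph] ch by (simp add: of_nat_diff algebra_simps)
  qed
  have "int n ^ 2 + (int c) ^ 2 - int c \<le> int (card (compl_edges V E))"
    using cc E3 by (simp add: power2_eq_square algebra_simps)
  then show ?thesis using i0 beta_c i0' by (simp add: Let_def)
qed

end
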